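(* The set $E(K_4)\times E(K_6)$ can be partitioned into $14$ blocks; that is, $g(K_4,K_6)\le 14<(4-1)(6-1)$.
   Context: $K_m$ is the complete graph on $m$ vertices. A complete bipartite subgraph of a graph $G$ has two disjoint nonempty vertex classes $X,Y$ and edge set all $xy$ with $x\in X,y\in Y$. For graphs $G,H$, a block is a set $E(B_1)\times E(B_2)$ where $B_1$ is a complete bipartite subgraph of $G$ and $B_2$ a complete bipartite subgraph of $H$; $g(G,H)$ is the minimum number of blocks partitioning $E(G)\times E(H)$. *)

theory Defs
  imports Main
begin

text \<open>Graphs are represented by their edge sets: an edge is a 2-element set of vertices.\<close>

definition complete_graph :: "nat \<Rightarrow> nat set set" where
  "complete_graph m = {{x, y} | x y. x < m \<and> y < m \<and> x \<noteq> y}"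

definition biclique_edges :: "'a set \<Rightarrow> 'a set \<Rightarrow> 'a set set" where
  "biclique_edges X Y = {{x, y} | x y. x \<in> X \<and> y \<in> Y}"

definition cbs_edges :: "'a set set \<Rightarrow> 'a set set \<Rightarrow> bool" where
  "cbs_edges E F \<longleftrightarrow> (\<exists>X Y. X \<noteq> {} \<and> Y \<noteq> {} \<and> X \<inter> Y = {} \<and>
      biclique_edges X Y \<subseteq> E \<and> F = biclique_edges X Y)"

definition is_block :: "'a set set \<Rightarrow> 'b set set \<Rightarrow> ('a set \<times> 'b set) set \<Rightarrow> bool" where
  "is_block EG EH B \<longleftrightarrow> (\<exists>F1 F2. cbs_edges EG F1 \<and> cbs_edges EH F2 \<and> B = F1 \<times> F2)"

definition block_partition :: "'a set set \<Rightarrow> 'b set set \<Rightarrow> ('a set \<times> 'b set) set set \<Rightarrow> bool" where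
  "block_partition EG EH P \<longleftrightarrow> finite P \<and> (\<forall>B\<in>P. is_block EG EH B) \<and>
      pairwise disjnt P \<and> \<Union>P = EG \<times> EH"

definition g :: "'a set set \<Rightarrow> 'b set set \<Rightarrow> nat" where
  "g EG EH = (LEAST n. \<exists>P. block_partition EG EH P \<and> card P = n)"

end

theory Submission
  imports Defs
begin

definition bl :: "nat set \<Rightarrow> nat set \<Rightarrow> nat set \<Rightarrow> nat set \<Rightarrow> (nat set \<times> nat set) set" where
  "bl X1 Y1 X2 Y2 = biclique_edges X1 Y1 \<times> biclique_edges X2 Y2"

lemma cg_alt: "complete_graph n = {{x,y}|x y. x < y \<and> y < n}"
  unfolding complete_graph_def
proof (intro set_eqI iffI)
  fix e assume "e \<in> {{x, y} |x y. x < n \<and> y < n \<and> x \<noteq> y}"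
  then obtain x y where e: "e = {x,y}" "x < n" "y < n" "x \<noteq> y" by blast
  show "e \<in> {{x,y}|x y. x < y \<and> y < n}"
  proof (cases "x < y")
    case True then show ?thesis using e by blast
  next
    case False
    then have "y < x" using e(4) by simp
    moreover have "e = {y,x}" using e(1) by (simp add: insert_commute)
    ultimately show ?thesis using e(2) by blast
  qed
next
  fix e assume "e \<in> {{x,y}|x y. x < y \<and> y < n}"
  then show "e \<in> {{x, y} |x y. x < n \<and> y < n \<and> x \<noteq> y}" by force
qed

lemma lt6: "y < (6::nat) \<Longrightarrow> y=0 \<or> y=1 \<or> y=2 \<or> y=3 \<or> y=4 \<or> y=5" by arith
lemma lt4: "y < (4::nat) \<Longrightarrow> y=0 \<or> y=1 \<or> y=2 \<or> y=3" by arith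

lemma be_mem: "e \<in> biclique_edges X Y \<Longrightarrow> (\<And>x y. e = {x,y} \<Longrightarrow> x \<in> X \<Longrightarrow> y \<in> Y \<Longrightarrow> P) \<Longrightarrow> P"
  unfolding biclique_edges_def by blast

lemma be_sub:
  assumes "X \<inter> Y = {}" "X \<subseteq> {..<n}" "Y \<subseteq> {..<n}"
  shows "biclique_edges X Y \<subseteq> complete_graph n"
proof
  fix e assume "e \<in> biclique_edges X Y"
  then obtain x y where e: "e = {x,y}" "x \<in> X" "y \<in> Y" by (rule be_mem)
  have "x \<noteq> y" using assms(1) e(2) e(3) by blast
  moreover have "x < n" "y < n" using assms(2,3) e(2,3) by auto
  ultimately show "e \<in> complete_graph n" unfolding complete_graph_def using e(1) by blast
qed

lemma cbs:
  assumes "X \<noteq> {}" "Y \<noteq> {}" "X \<inter> Y = {}" "X \<subseteq> {..<n}" "Y \<subseteq> {..<n}"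
  shows "cbs_edges (complete_graph n) (biclique_edges X Y)"
  unfolding cbs_edges_def
  by (rule exI[of _ X], rule exI[of _ Y]) (simp add: assms be_sub)

lemma blk:
  assumes "X1 \<noteq> {}" "Y1 \<noteq> {}" "X1 \<inter> Y1 = {}" "X1 \<subseteq> {..<n}" "Y1 \<subseteq> {..<n}"
    "X2 \<noteq> {}" "Y2 \<noteq> {}" "X2 \<inter> Y2 = {}" "X2 \<subseteq> {..<m}" "Y2 \<subseteq> {..<m}"
  shows "is_block (complete_graph n) (complete_graph m) (bl X1 Y1 X2 Y2)"
  unfolding is_block_def bl_def
  by (rule exI[of _ "biclique_edges X1 Y1"], rule exI[of _ "biclique_edges X2 Y2"])
     (simp add: cbs assms)

lemma blk_sub:
  assumes "X1 \<inter> Y1 = {}" "X1 \<subseteq> {..<n}" "Y1 \<subseteq> {..<n}"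
    "X2 \<inter> Y2 = {}" "X2 \<subseteq> {..<m}" "Y2 \<subseteq> {..<m}"
  shows "bl X1 Y1 X2 Y2 \<subseteq> complete_graph n \<times> complete_graph m"
  unfolding bl_def using be_sub[OF assms(1-3)] be_sub[OF assms(4-6)] by (rule Sigma_mono)

lemma disj_prod: "disjnt A C \<or> disjnt B D \<Longrightarrow> disjnt (A \<times> B) (C \<times> D)"
  unfolding disjnt_def by auto

lemma be_disj:
  assumes "X \<inter> X' = {} \<or> Y \<inter> Y' = {}" "X \<inter> Y' = {} \<or> Y \<inter> X' = {}"
  shows "disjnt (biclique_edges X Y) (biclique_edges X' Y')"
  unfolding disjnt_def
proof (rule equals0I)
  fix e assume "e \<in> biclique_edges X Y \<inter> biclique_edges X' Y'"
  then have "e \<in> biclique_edges X Y" "e \<in> biclique_edges X' Y'" by auto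
  from this(1) obtain x y where e: "e={x,y}" "x\<in>X" "y\<in>Y" by (rule be_mem)
  from \<open>e \<in> biclique_edges X' Y'\<close> obtain x' y' where e': "e={x',y'}" "x'\<in>X'" "y'\<in>Y'" by (rule be_mem)
  have "{x,y} = {x',y'}" using e(1) e'(1) by simp
  then have "(x=x' \<and> y=y') \<or> (x=y' \<and> y=x')" unfolding doubleton_eq_iff .
  then show False using assms e e' by blast
qed

lemma memI2: "x \<in> X1 \<Longrightarrow> y \<in> Y1 \<Longrightarrow> u \<in> X2 \<Longrightarrow> w \<in> Y2 \<Longrightarrow> {x,y} = p \<Longrightarrow> {u,w} = q \<Longrightarrow>
  (p,q) \<in> bl X1 Y1 X2 Y2"
  unfolding bl_def biclique_edges_def by blast

lemma pw_ins: "(\<forall>y\<in>S. R x y \<and> R y x) \<Longrightarrow> pairwise R S \<Longrightarrow> pairwise R (insert x S) = True"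
  unfolding pairwise_def by blast

lemma Ball_ins: "(\<forall>y\<in>insert a B. P y) = (P a \<and> (\<forall>y\<in>B. P y))" by simp
lemma Ball_emp: "(\<forall>y\<in>{}. P y) = True" by simp

lemma pairs6: "u < w \<Longrightarrow> w < (6::nat) \<Longrightarrow>
  (u=0 \<and> w=1) \<or> (u=0 \<and> w=2) \<or> (u=0 \<and> w=3) \<or> (u=0 \<and> w=4) \<or> (u=0 \<and> w=5) \<or>
  (u=1 \<and> w=2) \<or> (u=1 \<and> w=3) \<or> (u=1 \<and> w=4) \<or> (u=1 \<and> w=5) \<or>
  (u=2 \<and> w=3) \<or> (u=2 \<and> w=4) \<or> (u=2 \<and> w=5) \<or>
  (u=3 \<and> w=4) \<or> (u=3 \<and> w=5) \<or> (u=4 \<and> w=5)"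
proof -
  assume a: "u < w" "w < 6"
  then have "u < 6" by simp
  from lt6[OF this] lt6[OF a(2)] a(1) show ?thesis by (elim disjE) simp_all
qed

lemma pairs4: "u < w \<Longrightarrow> w < (4::nat) \<Longrightarrow>
  (u=0 \<and> w=1) \<or> (u=0 \<and> w=2) \<or> (u=0 \<and> w=3) \<or>
  (u=1 \<and> w=2) \<or> (u=1 \<and> w=3) \<or> (u=2 \<and> w=3)"
proof -
  assume a: "u < w" "w < 4"
  then have "u < 4" by simp
  from lt4[OF this] lt4[OF a(2)] a(1) show ?thesis by (elim disjE) simp_all
qed

definition PP :: "(nat set \<times> nat set) set list" where
  "PP = [bl {2} {3} {0,4} {1,2,5},
    bl {1} {3} {0,5} {1,3},
    bl {1} {3} {2} {3,4,5},
    bl {1} {2} {0,2,3} {1,4},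
    bl {0} {3} {0,2,3} {1,4},
    bl {0} {2} {0,5} {1,3},
    bl {0} {2} {2} {3,4,5},
    bl {0,1} {2,3} {0} {2,5},
    bl {0,1} {2,3} {1,5} {4},
    bl {0} {1} {0,4} {1,2,5},
    bl {0,2} {1,3} {0,2} {3},
    bl {0,2} {1,3} {1,2,3} {5},
    bl {0,3} {1,2} {0,3} {4},
    bl {0,3} {1,2} {1} {2,3}]"

lemma ib0: "is_block (complete_graph 4) (complete_graph 6) (bl {2} {3} {0,4} {1,2,5})"
  by (rule blk) simp_all

lemma sb0: "bl {2} {3} {0,4} {1,2,5} \<subseteq> complete_graph 4 \<times> complete_graph 6"
  by (rule blk_sub) simp_all

lemma pm0: "bl {2} {3} {0,4} {1,2,5} \<in> set PP"
  unfolding PP_def by (simp only: list.set insert_iff simp_thms)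

lemma ib1: "is_block (complete_graph 4) (complete_graph 6) (bl {1} {3} {0,5} {1,3})"
  by (rule blk) simp_all

lemma sb1: "bl {1} {3} {0,5} {1,3} \<subseteq> complete_graph 4 \<times> complete_graph 6"
  by (rule blk_sub) simp_all

lemma pm1: "bl {1} {3} {0,5} {1,3} \<in> set PP"
  unfolding PP_def by (simp only: list.set insert_iff simp_thms)

lemma ib2: "is_block (complete_graph 4) (complete_graph 6) (bl {1} {3} {2} {3,4,5})"
  by (rule blk) simp_all

lemma sb2: "bl {1} {3} {2} {3,4,5} \<subseteq> complete_graph 4 \<times> complete_graph 6"
  by (rule blk_sub) simp_all

lemma pm2: "bl {1} {3} {2} {3,4,5} \<in> set PP"
  unfolding PP_def by (simp only: list.set insert_iff simp_thms)

lemma ib3: "is_block (complete_graph 4) (complete_graph 6) (bl {1} {2} {0,2,3} {1,4})"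
  by (rule blk) simp_all

lemma sb3: "bl {1} {2} {0,2,3} {1,4} \<subseteq> complete_graph 4 \<times> complete_graph 6"
  by (rule blk_sub) simp_all

lemma pm3: "bl {1} {2} {0,2,3} {1,4} \<in> set PP"
  unfolding PP_def by (simp only: list.set insert_iff simp_thms)

lemma ib4: "is_block (complete_graph 4) (complete_graph 6) (bl {0} {3} {0,2,3} {1,4})"
  by (rule blk) simp_all

lemma sb4: "bl {0} {3} {0,2,3} {1,4} \<subseteq> complete_graph 4 \<times> complete_graph 6"
  by (rule blk_sub) simp_all

lemma pm4: "bl {0} {3} {0,2,3} {1,4} \<in> set PP"
  unfolding PP_def by (simp only: list.set insert_iff simp_thms)

lemma ib5: "is_block (complete_graph 4) (complete_graph 6) (bl {0} {2} {0,5} {1,3})"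
  by (rule blk) simp_all

lemma sb5: "bl {0} {2} {0,5} {1,3} \<subseteq> complete_graph 4 \<times> complete_graph 6"
  by (rule blk_sub) simp_all

lemma pm5: "bl {0} {2} {0,5} {1,3} \<in> set PP"
  unfolding PP_def by (simp only: list.set insert_iff simp_thms)

lemma ib6: "is_block (complete_graph 4) (complete_graph 6) (bl {0} {2} {2} {3,4,5})"
  by (rule blk) simp_all

lemma sb6: "bl {0} {2} {2} {3,4,5} \<subseteq> complete_graph 4 \<times> complete_graph 6"
  by (rule blk_sub) simp_all

lemma pm6: "bl {0} {2} {2} {3,4,5} \<in> set PP"
  unfolding PP_def by (simp only: list.set insert_iff simp_thms)

lemma ib7: "is_block (complete_graph 4) (complete_graph 6) (bl {0,1} {2,3} {0} {2,5})"
  by (rule blk) simp_all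

lemma sb7: "bl {0,1} {2,3} {0} {2,5} \<subseteq> complete_graph 4 \<times> complete_graph 6"
  by (rule blk_sub) simp_all

lemma pm7: "bl {0,1} {2,3} {0} {2,5} \<in> set PP"
  unfolding PP_def by (simp only: list.set insert_iff simp_thms)

lemma ib8: "is_block (complete_graph 4) (complete_graph 6) (bl {0,1} {2,3} {1,5} {4})"
  by (rule blk) simp_all

lemma sb8: "bl {0,1} {2,3} {1,5} {4} \<subseteq> complete_graph 4 \<times> complete_graph 6"
  by (rule blk_sub) simp_all

lemma pm8: "bl {0,1} {2,3} {1,5} {4} \<in> set PP"
  unfolding PP_def by (simp only: list.set insert_iff simp_thms)

lemma ib9: "is_block (complete_graph 4) (complete_graph 6) (bl {0} {1} {0,4} {1,2,5})"
  by (rule blk) simp_all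

lemma sb9: "bl {0} {1} {0,4} {1,2,5} \<subseteq> complete_graph 4 \<times> complete_graph 6"
  by (rule blk_sub) simp_all

lemma pm9: "bl {0} {1} {0,4} {1,2,5} \<in> set PP"
  unfolding PP_def by (simp only: list.set insert_iff simp_thms)

lemma ib10: "is_block (complete_graph 4) (complete_graph 6) (bl {0,2} {1,3} {0,2} {3})"
  by (rule blk) simp_all

lemma sb10: "bl {0,2} {1,3} {0,2} {3} \<subseteq> complete_graph 4 \<times> complete_graph 6"
  by (rule blk_sub) simp_all

lemma pm10: "bl {0,2} {1,3} {0,2} {3} \<in> set PP"
  unfolding PP_def by (simp only: list.set insert_iff simp_thms)

lemma ib11: "is_block (complete_graph 4) (complete_graph 6) (bl {0,2} {1,3} {1,2,3} {5})"
  by (rule blk) simp_all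

lemma sb11: "bl {0,2} {1,3} {1,2,3} {5} \<subseteq> complete_graph 4 \<times> complete_graph 6"
  by (rule blk_sub) simp_all

lemma pm11: "bl {0,2} {1,3} {1,2,3} {5} \<in> set PP"
  unfolding PP_def by (simp only: list.set insert_iff simp_thms)

lemma ib12: "is_block (complete_graph 4) (complete_graph 6) (bl {0,3} {1,2} {0,3} {4})"
  by (rule blk) simp_all

lemma sb12: "bl {0,3} {1,2} {0,3} {4} \<subseteq> complete_graph 4 \<times> complete_graph 6"
  by (rule blk_sub) simp_all

lemma pm12: "bl {0,3} {1,2} {0,3} {4} \<in> set PP"
  unfolding PP_def by (simp only: list.set insert_iff simp_thms)

lemma ib13: "is_block (complete_graph 4) (complete_graph 6) (bl {0,3} {1,2} {1} {2,3})"
  by (rule blk) simp_all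

lemma sb13: "bl {0,3} {1,2} {1} {2,3} \<subseteq> complete_graph 4 \<times> complete_graph 6"
  by (rule blk_sub) simp_all

lemma pm13: "bl {0,3} {1,2} {1} {2,3} \<in> set PP"
  unfolding PP_def by (simp only: list.set insert_iff simp_thms)

lemma blocks_ok: "\<forall>B\<in>set PP. is_block (complete_graph 4) (complete_graph 6) B"
  unfolding PP_def by (simp only: list.set Ball_ins Ball_emp ib0 ib1 ib2 ib3 ib4 ib5 ib6 ib7 ib8 ib9 ib10 ib11 ib12 ib13 simp_thms)

lemma sub_ok: "\<Union>(set PP) \<subseteq> complete_graph 4 \<times> complete_graph 6"
  unfolding PP_def by (simp only: list.set Union_insert Union_empty Un_subset_iff empty_subsetI sb0 sb1 sb2 sb3 sb4 sb5 sb6 sb7 sb8 sb9 sb10 sb11 sb12 sb13 simp_thms)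

lemma d0_1: "disjnt (bl {2} {3} {0,4} {1,2,5}) (bl {1} {3} {0,5} {1,3})"
  unfolding bl_def by (rule disj_prod, rule disjI1, rule be_disj) simp_all

lemma d0_2: "disjnt (bl {2} {3} {0,4} {1,2,5}) (bl {1} {3} {2} {3,4,5})"
  unfolding bl_def by (rule disj_prod, rule disjI1, rule be_disj) simp_all

lemma d0_3: "disjnt (bl {2} {3} {0,4} {1,2,5}) (bl {1} {2} {0,2,3} {1,4})"
  unfolding bl_def by (rule disj_prod, rule disjI1, rule be_disj) simp_all

lemma d0_4: "disjnt (bl {2} {3} {0,4} {1,2,5}) (bl {0} {3} {0,2,3} {1,4})"
  unfolding bl_def by (rule disj_prod, rule disjI1, rule be_disj) simp_all

lemma d0_5: "disjnt (bl {2} {3} {0,4} {1,2,5}) (bl {0} {2} {0,5} {1,3})"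
  unfolding bl_def by (rule disj_prod, rule disjI1, rule be_disj) simp_all

lemma d0_6: "disjnt (bl {2} {3} {0,4} {1,2,5}) (bl {0} {2} {2} {3,4,5})"
  unfolding bl_def by (rule disj_prod, rule disjI1, rule be_disj) simp_all

lemma d0_7: "disjnt (bl {2} {3} {0,4} {1,2,5}) (bl {0,1} {2,3} {0} {2,5})"
  unfolding bl_def by (rule disj_prod, rule disjI1, rule be_disj) simp_all

lemma d0_8: "disjnt (bl {2} {3} {0,4} {1,2,5}) (bl {0,1} {2,3} {1,5} {4})"
  unfolding bl_def by (rule disj_prod, rule disjI1, rule be_disj) simp_all

lemma d0_9: "disjnt (bl {2} {3} {0,4} {1,2,5}) (bl {0} {1} {0,4} {1,2,5})"
  unfolding bl_def by (rule disj_prod, rule disjI1, rule be_disj) simp_all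

lemma d0_10: "disjnt (bl {2} {3} {0,4} {1,2,5}) (bl {0,2} {1,3} {0,2} {3})"
  unfolding bl_def by (rule disj_prod, rule disjI2, rule be_disj) simp_all

lemma d0_11: "disjnt (bl {2} {3} {0,4} {1,2,5}) (bl {0,2} {1,3} {1,2,3} {5})"
  unfolding bl_def by (rule disj_prod, rule disjI2, rule be_disj) simp_all

lemma d0_12: "disjnt (bl {2} {3} {0,4} {1,2,5}) (bl {0,3} {1,2} {0,3} {4})"
  unfolding bl_def by (rule disj_prod, rule disjI2, rule be_disj) simp_all

lemma d0_13: "disjnt (bl {2} {3} {0,4} {1,2,5}) (bl {0,3} {1,2} {1} {2,3})"
  unfolding bl_def by (rule disj_prod, rule disjI2, rule be_disj) simp_all

lemma d1_2: "disjnt (bl {1} {3} {0,5} {1,3}) (bl {1} {3} {2} {3,4,5})"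
  unfolding bl_def by (rule disj_prod, rule disjI2, rule be_disj) simp_all

lemma d1_3: "disjnt (bl {1} {3} {0,5} {1,3}) (bl {1} {2} {0,2,3} {1,4})"
  unfolding bl_def by (rule disj_prod, rule disjI1, rule be_disj) simp_all

lemma d1_4: "disjnt (bl {1} {3} {0,5} {1,3}) (bl {0} {3} {0,2,3} {1,4})"
  unfolding bl_def by (rule disj_prod, rule disjI1, rule be_disj) simp_all

lemma d1_5: "disjnt (bl {1} {3} {0,5} {1,3}) (bl {0} {2} {0,5} {1,3})"
  unfolding bl_def by (rule disj_prod, rule disjI1, rule be_disj) simp_all

lemma d1_6: "disjnt (bl {1} {3} {0,5} {1,3}) (bl {0} {2} {2} {3,4,5})"
  unfolding bl_def by (rule disj_prod, rule disjI1, rule be_disj) simp_all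

lemma d1_7: "disjnt (bl {1} {3} {0,5} {1,3}) (bl {0,1} {2,3} {0} {2,5})"
  unfolding bl_def by (rule disj_prod, rule disjI2, rule be_disj) simp_all

lemma d1_8: "disjnt (bl {1} {3} {0,5} {1,3}) (bl {0,1} {2,3} {1,5} {4})"
  unfolding bl_def by (rule disj_prod, rule disjI2, rule be_disj) simp_all

lemma d1_9: "disjnt (bl {1} {3} {0,5} {1,3}) (bl {0} {1} {0,4} {1,2,5})"
  unfolding bl_def by (rule disj_prod, rule disjI1, rule be_disj) simp_all

lemma d1_10: "disjnt (bl {1} {3} {0,5} {1,3}) (bl {0,2} {1,3} {0,2} {3})"
  unfolding bl_def by (rule disj_prod, rule disjI1, rule be_disj) simp_all

lemma d1_11: "disjnt (bl {1} {3} {0,5} {1,3}) (bl {0,2} {1,3} {1,2,3} {5})"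
  unfolding bl_def by (rule disj_prod, rule disjI1, rule be_disj) simp_all

lemma d1_12: "disjnt (bl {1} {3} {0,5} {1,3}) (bl {0,3} {1,2} {0,3} {4})"
  unfolding bl_def by (rule disj_prod, rule disjI2, rule be_disj) simp_all

lemma d1_13: "disjnt (bl {1} {3} {0,5} {1,3}) (bl {0,3} {1,2} {1} {2,3})"
  unfolding bl_def by (rule disj_prod, rule disjI2, rule be_disj) simp_all

lemma d2_3: "disjnt (bl {1} {3} {2} {3,4,5}) (bl {1} {2} {0,2,3} {1,4})"
  unfolding bl_def by (rule disj_prod, rule disjI1, rule be_disj) simp_all

lemma d2_4: "disjnt (bl {1} {3} {2} {3,4,5}) (bl {0} {3} {0,2,3} {1,4})"
  unfolding bl_def by (rule disj_prod, rule disjI1, rule be_disj) simp_all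

lemma d2_5: "disjnt (bl {1} {3} {2} {3,4,5}) (bl {0} {2} {0,5} {1,3})"
  unfolding bl_def by (rule disj_prod, rule disjI1, rule be_disj) simp_all

lemma d2_6: "disjnt (bl {1} {3} {2} {3,4,5}) (bl {0} {2} {2} {3,4,5})"
  unfolding bl_def by (rule disj_prod, rule disjI1, rule be_disj) simp_all

lemma d2_7: "disjnt (bl {1} {3} {2} {3,4,5}) (bl {0,1} {2,3} {0} {2,5})"
  unfolding bl_def by (rule disj_prod, rule disjI2, rule be_disj) simp_all

lemma d2_8: "disjnt (bl {1} {3} {2} {3,4,5}) (bl {0,1} {2,3} {1,5} {4})"
  unfolding bl_def by (rule disj_prod, rule disjI2, rule be_disj) simp_all

lemma d2_9: "disjnt (bl {1} {3} {2} {3,4,5}) (bl {0} {1} {0,4} {1,2,5})"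
  unfolding bl_def by (rule disj_prod, rule disjI1, rule be_disj) simp_all

lemma d2_10: "disjnt (bl {1} {3} {2} {3,4,5}) (bl {0,2} {1,3} {0,2} {3})"
  unfolding bl_def by (rule disj_prod, rule disjI1, rule be_disj) simp_all

lemma d2_11: "disjnt (bl {1} {3} {2} {3,4,5}) (bl {0,2} {1,3} {1,2,3} {5})"
  unfolding bl_def by (rule disj_prod, rule disjI1, rule be_disj) simp_all

lemma d2_12: "disjnt (bl {1} {3} {2} {3,4,5}) (bl {0,3} {1,2} {0,3} {4})"
  unfolding bl_def by (rule disj_prod, rule disjI2, rule be_disj) simp_all

lemma d2_13: "disjnt (bl {1} {3} {2} {3,4,5}) (bl {0,3} {1,2} {1} {2,3})"
  unfolding bl_def by (rule disj_prod, rule disjI2, rule be_disj) simp_all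

lemma d3_4: "disjnt (bl {1} {2} {0,2,3} {1,4}) (bl {0} {3} {0,2,3} {1,4})"
  unfolding bl_def by (rule disj_prod, rule disjI1, rule be_disj) simp_all

lemma d3_5: "disjnt (bl {1} {2} {0,2,3} {1,4}) (bl {0} {2} {0,5} {1,3})"
  unfolding bl_def by (rule disj_prod, rule disjI1, rule be_disj) simp_all

lemma d3_6: "disjnt (bl {1} {2} {0,2,3} {1,4}) (bl {0} {2} {2} {3,4,5})"
  unfolding bl_def by (rule disj_prod, rule disjI1, rule be_disj) simp_all

lemma d3_7: "disjnt (bl {1} {2} {0,2,3} {1,4}) (bl {0,1} {2,3} {0} {2,5})"
  unfolding bl_def by (rule disj_prod, rule disjI2, rule be_disj) simp_all

lemma d3_8: "disjnt (bl {1} {2} {0,2,3} {1,4}) (bl {0,1} {2,3} {1,5} {4})"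
  unfolding bl_def by (rule disj_prod, rule disjI2, rule be_disj) simp_all

lemma d3_9: "disjnt (bl {1} {2} {0,2,3} {1,4}) (bl {0} {1} {0,4} {1,2,5})"
  unfolding bl_def by (rule disj_prod, rule disjI1, rule be_disj) simp_all

lemma d3_10: "disjnt (bl {1} {2} {0,2,3} {1,4}) (bl {0,2} {1,3} {0,2} {3})"
  unfolding bl_def by (rule disj_prod, rule disjI2, rule be_disj) simp_all

lemma d3_11: "disjnt (bl {1} {2} {0,2,3} {1,4}) (bl {0,2} {1,3} {1,2,3} {5})"
  unfolding bl_def by (rule disj_prod, rule disjI2, rule be_disj) simp_all

lemma d3_12: "disjnt (bl {1} {2} {0,2,3} {1,4}) (bl {0,3} {1,2} {0,3} {4})"
  unfolding bl_def by (rule disj_prod, rule disjI1, rule be_disj) simp_all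

lemma d3_13: "disjnt (bl {1} {2} {0,2,3} {1,4}) (bl {0,3} {1,2} {1} {2,3})"
  unfolding bl_def by (rule disj_prod, rule disjI1, rule be_disj) simp_all

lemma d4_5: "disjnt (bl {0} {3} {0,2,3} {1,4}) (bl {0} {2} {0,5} {1,3})"
  unfolding bl_def by (rule disj_prod, rule disjI1, rule be_disj) simp_all

lemma d4_6: "disjnt (bl {0} {3} {0,2,3} {1,4}) (bl {0} {2} {2} {3,4,5})"
  unfolding bl_def by (rule disj_prod, rule disjI1, rule be_disj) simp_all

lemma d4_7: "disjnt (bl {0} {3} {0,2,3} {1,4}) (bl {0,1} {2,3} {0} {2,5})"
  unfolding bl_def by (rule disj_prod, rule disjI2, rule be_disj) simp_all

lemma d4_8: "disjnt (bl {0} {3} {0,2,3} {1,4}) (bl {0,1} {2,3} {1,5} {4})"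
  unfolding bl_def by (rule disj_prod, rule disjI2, rule be_disj) simp_all

lemma d4_9: "disjnt (bl {0} {3} {0,2,3} {1,4}) (bl {0} {1} {0,4} {1,2,5})"
  unfolding bl_def by (rule disj_prod, rule disjI1, rule be_disj) simp_all

lemma d4_10: "disjnt (bl {0} {3} {0,2,3} {1,4}) (bl {0,2} {1,3} {0,2} {3})"
  unfolding bl_def by (rule disj_prod, rule disjI2, rule be_disj) simp_all

lemma d4_11: "disjnt (bl {0} {3} {0,2,3} {1,4}) (bl {0,2} {1,3} {1,2,3} {5})"
  unfolding bl_def by (rule disj_prod, rule disjI2, rule be_disj) simp_all

lemma d4_12: "disjnt (bl {0} {3} {0,2,3} {1,4}) (bl {0,3} {1,2} {0,3} {4})"
  unfolding bl_def by (rule disj_prod, rule disjI1, rule be_disj) simp_all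

lemma d4_13: "disjnt (bl {0} {3} {0,2,3} {1,4}) (bl {0,3} {1,2} {1} {2,3})"
  unfolding bl_def by (rule disj_prod, rule disjI1, rule be_disj) simp_all

lemma d5_6: "disjnt (bl {0} {2} {0,5} {1,3}) (bl {0} {2} {2} {3,4,5})"
  unfolding bl_def by (rule disj_prod, rule disjI2, rule be_disj) simp_all

lemma d5_7: "disjnt (bl {0} {2} {0,5} {1,3}) (bl {0,1} {2,3} {0} {2,5})"
  unfolding bl_def by (rule disj_prod, rule disjI2, rule be_disj) simp_all

lemma d5_8: "disjnt (bl {0} {2} {0,5} {1,3}) (bl {0,1} {2,3} {1,5} {4})"
  unfolding bl_def by (rule disj_prod, rule disjI2, rule be_disj) simp_all

lemma d5_9: "disjnt (bl {0} {2} {0,5} {1,3}) (bl {0} {1} {0,4} {1,2,5})"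
  unfolding bl_def by (rule disj_prod, rule disjI1, rule be_disj) simp_all

lemma d5_10: "disjnt (bl {0} {2} {0,5} {1,3}) (bl {0,2} {1,3} {0,2} {3})"
  unfolding bl_def by (rule disj_prod, rule disjI1, rule be_disj) simp_all

lemma d5_11: "disjnt (bl {0} {2} {0,5} {1,3}) (bl {0,2} {1,3} {1,2,3} {5})"
  unfolding bl_def by (rule disj_prod, rule disjI1, rule be_disj) simp_all

lemma d5_12: "disjnt (bl {0} {2} {0,5} {1,3}) (bl {0,3} {1,2} {0,3} {4})"
  unfolding bl_def by (rule disj_prod, rule disjI2, rule be_disj) simp_all

lemma d5_13: "disjnt (bl {0} {2} {0,5} {1,3}) (bl {0,3} {1,2} {1} {2,3})"
  unfolding bl_def by (rule disj_prod, rule disjI2, rule be_disj) simp_all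

lemma d6_7: "disjnt (bl {0} {2} {2} {3,4,5}) (bl {0,1} {2,3} {0} {2,5})"
  unfolding bl_def by (rule disj_prod, rule disjI2, rule be_disj) simp_all

lemma d6_8: "disjnt (bl {0} {2} {2} {3,4,5}) (bl {0,1} {2,3} {1,5} {4})"
  unfolding bl_def by (rule disj_prod, rule disjI2, rule be_disj) simp_all

lemma d6_9: "disjnt (bl {0} {2} {2} {3,4,5}) (bl {0} {1} {0,4} {1,2,5})"
  unfolding bl_def by (rule disj_prod, rule disjI1, rule be_disj) simp_all

lemma d6_10: "disjnt (bl {0} {2} {2} {3,4,5}) (bl {0,2} {1,3} {0,2} {3})"
  unfolding bl_def by (rule disj_prod, rule disjI1, rule be_disj) simp_all

lemma d6_11: "disjnt (bl {0} {2} {2} {3,4,5}) (bl {0,2} {1,3} {1,2,3} {5})"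
  unfolding bl_def by (rule disj_prod, rule disjI1, rule be_disj) simp_all

lemma d6_12: "disjnt (bl {0} {2} {2} {3,4,5}) (bl {0,3} {1,2} {0,3} {4})"
  unfolding bl_def by (rule disj_prod, rule disjI2, rule be_disj) simp_all

lemma d6_13: "disjnt (bl {0} {2} {2} {3,4,5}) (bl {0,3} {1,2} {1} {2,3})"
  unfolding bl_def by (rule disj_prod, rule disjI2, rule be_disj) simp_all

lemma d7_8: "disjnt (bl {0,1} {2,3} {0} {2,5}) (bl {0,1} {2,3} {1,5} {4})"
  unfolding bl_def by (rule disj_prod, rule disjI2, rule be_disj) simp_all

lemma d7_9: "disjnt (bl {0,1} {2,3} {0} {2,5}) (bl {0} {1} {0,4} {1,2,5})"
  unfolding bl_def by (rule disj_prod, rule disjI1, rule be_disj) simp_all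

lemma d7_10: "disjnt (bl {0,1} {2,3} {0} {2,5}) (bl {0,2} {1,3} {0,2} {3})"
  unfolding bl_def by (rule disj_prod, rule disjI2, rule be_disj) simp_all

lemma d7_11: "disjnt (bl {0,1} {2,3} {0} {2,5}) (bl {0,2} {1,3} {1,2,3} {5})"
  unfolding bl_def by (rule disj_prod, rule disjI2, rule be_disj) simp_all

lemma d7_12: "disjnt (bl {0,1} {2,3} {0} {2,5}) (bl {0,3} {1,2} {0,3} {4})"
  unfolding bl_def by (rule disj_prod, rule disjI2, rule be_disj) simp_all

lemma d7_13: "disjnt (bl {0,1} {2,3} {0} {2,5}) (bl {0,3} {1,2} {1} {2,3})"
  unfolding bl_def by (rule disj_prod, rule disjI2, rule be_disj) simp_all

lemma d8_9: "disjnt (bl {0,1} {2,3} {1,5} {4}) (bl {0} {1} {0,4} {1,2,5})"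
  unfolding bl_def by (rule disj_prod, rule disjI1, rule be_disj) simp_all

lemma d8_10: "disjnt (bl {0,1} {2,3} {1,5} {4}) (bl {0,2} {1,3} {0,2} {3})"
  unfolding bl_def by (rule disj_prod, rule disjI2, rule be_disj) simp_all

lemma d8_11: "disjnt (bl {0,1} {2,3} {1,5} {4}) (bl {0,2} {1,3} {1,2,3} {5})"
  unfolding bl_def by (rule disj_prod, rule disjI2, rule be_disj) simp_all

lemma d8_12: "disjnt (bl {0,1} {2,3} {1,5} {4}) (bl {0,3} {1,2} {0,3} {4})"
  unfolding bl_def by (rule disj_prod, rule disjI2, rule be_disj) simp_all

lemma d8_13: "disjnt (bl {0,1} {2,3} {1,5} {4}) (bl {0,3} {1,2} {1} {2,3})"
  unfolding bl_def by (rule disj_prod, rule disjI2, rule be_disj) simp_all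

lemma d9_10: "disjnt (bl {0} {1} {0,4} {1,2,5}) (bl {0,2} {1,3} {0,2} {3})"
  unfolding bl_def by (rule disj_prod, rule disjI2, rule be_disj) simp_all

lemma d9_11: "disjnt (bl {0} {1} {0,4} {1,2,5}) (bl {0,2} {1,3} {1,2,3} {5})"
  unfolding bl_def by (rule disj_prod, rule disjI2, rule be_disj) simp_all

lemma d9_12: "disjnt (bl {0} {1} {0,4} {1,2,5}) (bl {0,3} {1,2} {0,3} {4})"
  unfolding bl_def by (rule disj_prod, rule disjI2, rule be_disj) simp_all

lemma d9_13: "disjnt (bl {0} {1} {0,4} {1,2,5}) (bl {0,3} {1,2} {1} {2,3})"
  unfolding bl_def by (rule disj_prod, rule disjI2, rule be_disj) simp_all

lemma d10_11: "disjnt (bl {0,2} {1,3} {0,2} {3}) (bl {0,2} {1,3} {1,2,3} {5})"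
  unfolding bl_def by (rule disj_prod, rule disjI2, rule be_disj) simp_all

lemma d10_12: "disjnt (bl {0,2} {1,3} {0,2} {3}) (bl {0,3} {1,2} {0,3} {4})"
  unfolding bl_def by (rule disj_prod, rule disjI2, rule be_disj) simp_all

lemma d10_13: "disjnt (bl {0,2} {1,3} {0,2} {3}) (bl {0,3} {1,2} {1} {2,3})"
  unfolding bl_def by (rule disj_prod, rule disjI2, rule be_disj) simp_all

lemma d11_12: "disjnt (bl {0,2} {1,3} {1,2,3} {5}) (bl {0,3} {1,2} {0,3} {4})"
  unfolding bl_def by (rule disj_prod, rule disjI2, rule be_disj) simp_all

lemma d11_13: "disjnt (bl {0,2} {1,3} {1,2,3} {5}) (bl {0,3} {1,2} {1} {2,3})"
  unfolding bl_def by (rule disj_prod, rule disjI2, rule be_disj) simp_all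

lemma d12_13: "disjnt (bl {0,3} {1,2} {0,3} {4}) (bl {0,3} {1,2} {1} {2,3})"
  unfolding bl_def by (rule disj_prod, rule disjI2, rule be_disj) simp_all

lemma disj_ok: "pairwise disjnt (set PP)"
  unfolding PP_def by (simp only: list.set pw_ins Ball_ins Ball_emp pairwise_empty d0_1 d0_1[THEN disjnt_sym] d0_2 d0_2[THEN disjnt_sym] d0_3 d0_3[THEN disjnt_sym] d0_4 d0_4[THEN disjnt_sym] d0_5 d0_5[THEN disjnt_sym] d0_6 d0_6[THEN disjnt_sym] d0_7 d0_7[THEN disjnt_sym] d0_8 d0_8[THEN disjnt_sym] d0_9 d0_9[THEN disjnt_sym] d0_10 d0_10[THEN disjnt_sym] d0_11 d0_11[THEN disjnt_sym] d0_12 d0_12[THEN disjnt_sym] d0_13 d0_13[THEN disjnt_sym] d1_2 d1_2[THEN disjnt_sym] d1_3 d1_3[THEN disjnt_sym] d1_4 d1_4[THEN disjnt_sym] d1_5 d1_5[THEN disjnt_sym] d1_6 d1_6[THEN disjnt_sym] d1_7 d1_7[THEN disjnt_sym] d1_8 d1_8[THEN disjnt_sym] d1_9 d1_9[THEN disjnt_sym] d1_10 d1_10[THEN disjnt_sym] d1_11 d1_11[THEN disjnt_sym] d1_12 d1_12[THEN disjnt_sym] d1_13 d1_13[THEN disjnt_sym] d2_3 d2_3[THEN disjnt_sym] d2_4 d2_4[THEN disjnt_sym] d2_5 d2_5[THEN disjnt_sym] d2_6 d2_6[THEN disjnt_sym] d2_7 d2_7[THEN disjnt_sym] d2_8 d2_8[THEN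 disjnt_sym] d2_9 d2_9[THEN disjnt_sym] d2_10 d2_10[THEN disjnt_sym] d2_11 d2_11[THEN disjnt_sym] d2_12 d2_12[THEN disjnt_sym] d2_13 d2_13[THEN disjnt_sym] d3_4 d3_4[THEN disjnt_sym] d3_5 d3_5[THEN disjnt_sym] d3_6 d3_6[THEN disjnt_sym] d3_7 d3_7[THEN disjnt_sym] d3_8 d3_8[THEN disjnt_sym] d3_9 d3_9[THEN disjnt_sym] d3_10 d3_10[THEN disjnt_sym] d3_11 d3_11[THEN disjnt_sym] d3_12 d3_12[THEN disjnt_sym] d3_13 d3_13[THEN disjnt_sym] d4_5 d4_5[THEN disjnt_sym] d4_6 d4_6[THEN disjnt_sym] d4_7 d4_7[THEN disjnt_sym] d4_8 d4_8[THEN disjnt_sym] d4_9 d4_9[THEN disjnt_sym] d4_10 d4_10[THEN disjnt_sym] d4_11 d4_11[THEN disjnt_sym] d4_12 d4_12[THEN disjnt_sym] d4_13 d4_13[THEN disjnt_sym] d5_6 d5_6[THEN disjnt_sym] d5_7 d5_7[THEN disjnt_sym] d5_8 d5_8[THEN disjnt_sym] d5_9 d5_9[THEN disjnt_sym] d5_10 d5_10[THEN disjnt_sym] d5_11 d5_11[THEN disjnt_sym] d5_12 d5_12[THEN disjnt_sym] d5_13 d5_13[THEN disjnt_sym] d6_7 d6_7[THEN disjnt_sym] d6_8 d6_8[THEN disjnt_sym] d6_9 d6_9[THEN disjnt_sym] d6_10 d6_10[THEN disjnt_sym] d6_11 d6_11[THEN disjnt_sym] d6_12 d6_12[THEN disjnt_sym]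 d6_13 d6_13[THEN disjnt_sym] d7_8 d7_8[THEN disjnt_sym] d7_9 d7_9[THEN disjnt_sym] d7_10 d7_10[THEN disjnt_sym] d7_11 d7_11[THEN disjnt_sym] d7_12 d7_12[THEN disjnt_sym] d7_13 d7_13[THEN disjnt_sym] d8_9 d8_9[THEN disjnt_sym] d8_10 d8_10[THEN disjnt_sym] d8_11 d8_11[THEN disjnt_sym] d8_12 d8_12[THEN disjnt_sym] d8_13 d8_13[THEN disjnt_sym] d9_10 d9_10[THEN disjnt_sym] d9_11 d9_11[THEN disjnt_sym] d9_12 d9_12[THEN disjnt_sym] d9_13 d9_13[THEN disjnt_sym] d10_11 d10_11[THEN disjnt_sym] d10_12 d10_12[THEN disjnt_sym] d10_13 d10_13[THEN disjnt_sym] d11_12 d11_12[THEN disjnt_sym] d11_13 d11_13[THEN disjnt_sym] d12_13 d12_13[THEN disjnt_sym] simp_thms)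

lemma m01_01: "({0,1},{0,1}) \<in> \<Union>(set PP)"
  by (rule UnionI[OF pm9 memI2[of 0 _ 1 _ 0 _ 1]]) (simp_all add: insert_commute)

lemma m01_02: "({0,1},{0,2}) \<in> \<Union>(set PP)"
  by (rule UnionI[OF pm9 memI2[of 0 _ 1 _ 0 _ 2]]) (simp_all add: insert_commute)

lemma m01_03: "({0,1},{0,3}) \<in> \<Union>(set PP)"
  by (rule UnionI[OF pm10 memI2[of 0 _ 1 _ 0 _ 3]]) (simp_all add: insert_commute)

lemma m01_04: "({0,1},{0,4}) \<in> \<Union>(set PP)"
  by (rule UnionI[OF pm12 memI2[of 0 _ 1 _ 0 _ 4]]) (simp_all add: insert_commute)

lemma m01_05: "({0,1},{0,5}) \<in> \<Union>(set PP)"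
  by (rule UnionI[OF pm9 memI2[of 0 _ 1 _ 0 _ 5]]) (simp_all add: insert_commute)

lemma m01_12: "({0,1},{1,2}) \<in> \<Union>(set PP)"
  by (rule UnionI[OF pm13 memI2[of 0 _ 1 _ 1 _ 2]]) (simp_all add: insert_commute)

lemma m01_13: "({0,1},{1,3}) \<in> \<Union>(set PP)"
  by (rule UnionI[OF pm13 memI2[of 0 _ 1 _ 1 _ 3]]) (simp_all add: insert_commute)

lemma m01_14: "({0,1},{1,4}) \<in> \<Union>(set PP)"
  by (rule UnionI[OF pm9 memI2[of 0 _ 1 _ 4 _ 1]]) (simp_all add: insert_commute)

lemma m01_15: "({0,1},{1,5}) \<in> \<Union>(set PP)"
  by (rule UnionI[OF pm11 memI2[of 0 _ 1 _ 1 _ 5]]) (simp_all add: insert_commute)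

lemma m01_23: "({0,1},{2,3}) \<in> \<Union>(set PP)"
  by (rule UnionI[OF pm10 memI2[of 0 _ 1 _ 2 _ 3]]) (simp_all add: insert_commute)

lemma m01_24: "({0,1},{2,4}) \<in> \<Union>(set PP)"
  by (rule UnionI[OF pm9 memI2[of 0 _ 1 _ 4 _ 2]]) (simp_all add: insert_commute)

lemma m01_25: "({0,1},{2,5}) \<in> \<Union>(set PP)"
  by (rule UnionI[OF pm11 memI2[of 0 _ 1 _ 2 _ 5]]) (simp_all add: insert_commute)

lemma m01_34: "({0,1},{3,4}) \<in> \<Union>(set PP)"
  by (rule UnionI[OF pm12 memI2[of 0 _ 1 _ 3 _ 4]]) (simp_all add: insert_commute)

lemma m01_35: "({0,1},{3,5}) \<in> \<Union>(set PP)"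
  by (rule UnionI[OF pm11 memI2[of 0 _ 1 _ 3 _ 5]]) (simp_all add: insert_commute)

lemma m01_45: "({0,1},{4,5}) \<in> \<Union>(set PP)"
  by (rule UnionI[OF pm9 memI2[of 0 _ 1 _ 4 _ 5]]) (simp_all add: insert_commute)

lemma m02_01: "({0,2},{0,1}) \<in> \<Union>(set PP)"
  by (rule UnionI[OF pm5 memI2[of 0 _ 2 _ 0 _ 1]]) (simp_all add: insert_commute)

lemma m02_02: "({0,2},{0,2}) \<in> \<Union>(set PP)"
  by (rule UnionI[OF pm7 memI2[of 0 _ 2 _ 0 _ 2]]) (simp_all add: insert_commute)

lemma m02_03: "({0,2},{0,3}) \<in> \<Union>(set PP)"
  by (rule UnionI[OF pm5 memI2[of 0 _ 2 _ 0 _ 3]]) (simp_all add: insert_commute)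

lemma m02_04: "({0,2},{0,4}) \<in> \<Union>(set PP)"
  by (rule UnionI[OF pm12 memI2[of 0 _ 2 _ 0 _ 4]]) (simp_all add: insert_commute)

lemma m02_05: "({0,2},{0,5}) \<in> \<Union>(set PP)"
  by (rule UnionI[OF pm7 memI2[of 0 _ 2 _ 0 _ 5]]) (simp_all add: insert_commute)

lemma m02_12: "({0,2},{1,2}) \<in> \<Union>(set PP)"
  by (rule UnionI[OF pm13 memI2[of 0 _ 2 _ 1 _ 2]]) (simp_all add: insert_commute)

lemma m02_13: "({0,2},{1,3}) \<in> \<Union>(set PP)"
  by (rule UnionI[OF pm13 memI2[of 0 _ 2 _ 1 _ 3]]) (simp_all add: insert_commute)

lemma m02_14: "({0,2},{1,4}) \<in> \<Union>(set PP)"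
  by (rule UnionI[OF pm8 memI2[of 0 _ 2 _ 1 _ 4]]) (simp_all add: insert_commute)

lemma m02_15: "({0,2},{1,5}) \<in> \<Union>(set PP)"
  by (rule UnionI[OF pm5 memI2[of 0 _ 2 _ 5 _ 1]]) (simp_all add: insert_commute)

lemma m02_23: "({0,2},{2,3}) \<in> \<Union>(set PP)"
  by (rule UnionI[OF pm6 memI2[of 0 _ 2 _ 2 _ 3]]) (simp_all add: insert_commute)

lemma m02_24: "({0,2},{2,4}) \<in> \<Union>(set PP)"
  by (rule UnionI[OF pm6 memI2[of 0 _ 2 _ 2 _ 4]]) (simp_all add: insert_commute)

lemma m02_25: "({0,2},{2,5}) \<in> \<Union>(set PP)"
  by (rule UnionI[OF pm6 memI2[of 0 _ 2 _ 2 _ 5]]) (simp_all add: insert_commute)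

lemma m02_34: "({0,2},{3,4}) \<in> \<Union>(set PP)"
  by (rule UnionI[OF pm12 memI2[of 0 _ 2 _ 3 _ 4]]) (simp_all add: insert_commute)

lemma m02_35: "({0,2},{3,5}) \<in> \<Union>(set PP)"
  by (rule UnionI[OF pm5 memI2[of 0 _ 2 _ 5 _ 3]]) (simp_all add: insert_commute)

lemma m02_45: "({0,2},{4,5}) \<in> \<Union>(set PP)"
  by (rule UnionI[OF pm8 memI2[of 0 _ 2 _ 5 _ 4]]) (simp_all add: insert_commute)

lemma m03_01: "({0,3},{0,1}) \<in> \<Union>(set PP)"
  by (rule UnionI[OF pm4 memI2[of 0 _ 3 _ 0 _ 1]]) (simp_all add: insert_commute)

lemma m03_02: "({0,3},{0,2}) \<in> \<Union>(set PP)"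
  by (rule UnionI[OF pm7 memI2[of 0 _ 3 _ 0 _ 2]]) (simp_all add: insert_commute)

lemma m03_03: "({0,3},{0,3}) \<in> \<Union>(set PP)"
  by (rule UnionI[OF pm10 memI2[of 0 _ 3 _ 0 _ 3]]) (simp_all add: insert_commute)

lemma m03_04: "({0,3},{0,4}) \<in> \<Union>(set PP)"
  by (rule UnionI[OF pm4 memI2[of 0 _ 3 _ 0 _ 4]]) (simp_all add: insert_commute)

lemma m03_05: "({0,3},{0,5}) \<in> \<Union>(set PP)"
  by (rule UnionI[OF pm7 memI2[of 0 _ 3 _ 0 _ 5]]) (simp_all add: insert_commute)

lemma m03_12: "({0,3},{1,2}) \<in> \<Union>(set PP)"
  by (rule UnionI[OF pm4 memI2[of 0 _ 3 _ 2 _ 1]]) (simp_all add: insert_commute)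

lemma m03_13: "({0,3},{1,3}) \<in> \<Union>(set PP)"
  by (rule UnionI[OF pm4 memI2[of 0 _ 3 _ 3 _ 1]]) (simp_all add: insert_commute)

lemma m03_14: "({0,3},{1,4}) \<in> \<Union>(set PP)"
  by (rule UnionI[OF pm8 memI2[of 0 _ 3 _ 1 _ 4]]) (simp_all add: insert_commute)

lemma m03_15: "({0,3},{1,5}) \<in> \<Union>(set PP)"
  by (rule UnionI[OF pm11 memI2[of 0 _ 3 _ 1 _ 5]]) (simp_all add: insert_commute)

lemma m03_23: "({0,3},{2,3}) \<in> \<Union>(set PP)"
  by (rule UnionI[OF pm10 memI2[of 0 _ 3 _ 2 _ 3]]) (simp_all add: insert_commute)

lemma m03_24: "({0,3},{2,4}) \<in> \<Union>(set PP)"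
  by (rule UnionI[OF pm4 memI2[of 0 _ 3 _ 2 _ 4]]) (simp_all add: insert_commute)

lemma m03_25: "({0,3},{2,5}) \<in> \<Union>(set PP)"
  by (rule UnionI[OF pm11 memI2[of 0 _ 3 _ 2 _ 5]]) (simp_all add: insert_commute)

lemma m03_34: "({0,3},{3,4}) \<in> \<Union>(set PP)"
  by (rule UnionI[OF pm4 memI2[of 0 _ 3 _ 3 _ 4]]) (simp_all add: insert_commute)

lemma m03_35: "({0,3},{3,5}) \<in> \<Union>(set PP)"
  by (rule UnionI[OF pm11 memI2[of 0 _ 3 _ 3 _ 5]]) (simp_all add: insert_commute)

lemma m03_45: "({0,3},{4,5}) \<in> \<Union>(set PP)"
  by (rule UnionI[OF pm8 memI2[of 0 _ 3 _ 5 _ 4]]) (simp_all add: insert_commute)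

lemma m12_01: "({1,2},{0,1}) \<in> \<Union>(set PP)"
  by (rule UnionI[OF pm3 memI2[of 1 _ 2 _ 0 _ 1]]) (simp_all add: insert_commute)

lemma m12_02: "({1,2},{0,2}) \<in> \<Union>(set PP)"
  by (rule UnionI[OF pm7 memI2[of 1 _ 2 _ 0 _ 2]]) (simp_all add: insert_commute)

lemma m12_03: "({1,2},{0,3}) \<in> \<Union>(set PP)"
  by (rule UnionI[OF pm10 memI2[of 2 _ 1 _ 0 _ 3]]) (simp_all add: insert_commute)

lemma m12_04: "({1,2},{0,4}) \<in> \<Union>(set PP)"
  by (rule UnionI[OF pm3 memI2[of 1 _ 2 _ 0 _ 4]]) (simp_all add: insert_commute)

lemma m12_05: "({1,2},{0,5}) \<in> \<Union>(set PP)"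
  by (rule UnionI[OF pm7 memI2[of 1 _ 2 _ 0 _ 5]]) (simp_all add: insert_commute)

lemma m12_12: "({1,2},{1,2}) \<in> \<Union>(set PP)"
  by (rule UnionI[OF pm3 memI2[of 1 _ 2 _ 2 _ 1]]) (simp_all add: insert_commute)

lemma m12_13: "({1,2},{1,3}) \<in> \<Union>(set PP)"
  by (rule UnionI[OF pm3 memI2[of 1 _ 2 _ 3 _ 1]]) (simp_all add: insert_commute)

lemma m12_14: "({1,2},{1,4}) \<in> \<Union>(set PP)"
  by (rule UnionI[OF pm8 memI2[of 1 _ 2 _ 1 _ 4]]) (simp_all add: insert_commute)

lemma m12_15: "({1,2},{1,5}) \<in> \<Union>(set PP)"
  by (rule UnionI[OF pm11 memI2[of 2 _ 1 _ 1 _ 5]]) (simp_all add: insert_commute)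

lemma m12_23: "({1,2},{2,3}) \<in> \<Union>(set PP)"
  by (rule UnionI[OF pm10 memI2[of 2 _ 1 _ 2 _ 3]]) (simp_all add: insert_commute)

lemma m12_24: "({1,2},{2,4}) \<in> \<Union>(set PP)"
  by (rule UnionI[OF pm3 memI2[of 1 _ 2 _ 2 _ 4]]) (simp_all add: insert_commute)

lemma m12_25: "({1,2},{2,5}) \<in> \<Union>(set PP)"
  by (rule UnionI[OF pm11 memI2[of 2 _ 1 _ 2 _ 5]]) (simp_all add: insert_commute)

lemma m12_34: "({1,2},{3,4}) \<in> \<Union>(set PP)"
  by (rule UnionI[OF pm3 memI2[of 1 _ 2 _ 3 _ 4]]) (simp_all add: insert_commute)

lemma m12_35: "({1,2},{3,5}) \<in> \<Union>(set PP)"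
  by (rule UnionI[OF pm11 memI2[of 2 _ 1 _ 3 _ 5]]) (simp_all add: insert_commute)

lemma m12_45: "({1,2},{4,5}) \<in> \<Union>(set PP)"
  by (rule UnionI[OF pm8 memI2[of 1 _ 2 _ 5 _ 4]]) (simp_all add: insert_commute)

lemma m13_01: "({1,3},{0,1}) \<in> \<Union>(set PP)"
  by (rule UnionI[OF pm1 memI2[of 1 _ 3 _ 0 _ 1]]) (simp_all add: insert_commute)

lemma m13_02: "({1,3},{0,2}) \<in> \<Union>(set PP)"
  by (rule UnionI[OF pm7 memI2[of 1 _ 3 _ 0 _ 2]]) (simp_all add: insert_commute)

lemma m13_03: "({1,3},{0,3}) \<in> \<Union>(set PP)"
  by (rule UnionI[OF pm1 memI2[of 1 _ 3 _ 0 _ 3]]) (simp_all add: insert_commute)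

lemma m13_04: "({1,3},{0,4}) \<in> \<Union>(set PP)"
  by (rule UnionI[OF pm12 memI2[of 3 _ 1 _ 0 _ 4]]) (simp_all add: insert_commute)

lemma m13_05: "({1,3},{0,5}) \<in> \<Union>(set PP)"
  by (rule UnionI[OF pm7 memI2[of 1 _ 3 _ 0 _ 5]]) (simp_all add: insert_commute)

lemma m13_12: "({1,3},{1,2}) \<in> \<Union>(set PP)"
  by (rule UnionI[OF pm13 memI2[of 3 _ 1 _ 1 _ 2]]) (simp_all add: insert_commute)

lemma m13_13: "({1,3},{1,3}) \<in> \<Union>(set PP)"
  by (rule UnionI[OF pm13 memI2[of 3 _ 1 _ 1 _ 3]]) (simp_all add: insert_commute)

lemma m13_14: "({1,3},{1,4}) \<in> \<Union>(set PP)"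
  by (rule UnionI[OF pm8 memI2[of 1 _ 3 _ 1 _ 4]]) (simp_all add: insert_commute)

lemma m13_15: "({1,3},{1,5}) \<in> \<Union>(set PP)"
  by (rule UnionI[OF pm1 memI2[of 1 _ 3 _ 5 _ 1]]) (simp_all add: insert_commute)

lemma m13_23: "({1,3},{2,3}) \<in> \<Union>(set PP)"
  by (rule UnionI[OF pm2 memI2[of 1 _ 3 _ 2 _ 3]]) (simp_all add: insert_commute)

lemma m13_24: "({1,3},{2,4}) \<in> \<Union>(set PP)"
  by (rule UnionI[OF pm2 memI2[of 1 _ 3 _ 2 _ 4]]) (simp_all add: insert_commute)

lemma m13_25: "({1,3},{2,5}) \<in> \<Union>(set PP)"
  by (rule UnionI[OF pm2 memI2[of 1 _ 3 _ 2 _ 5]]) (simp_all add: insert_commute)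

lemma m13_34: "({1,3},{3,4}) \<in> \<Union>(set PP)"
  by (rule UnionI[OF pm12 memI2[of 3 _ 1 _ 3 _ 4]]) (simp_all add: insert_commute)

lemma m13_35: "({1,3},{3,5}) \<in> \<Union>(set PP)"
  by (rule UnionI[OF pm1 memI2[of 1 _ 3 _ 5 _ 3]]) (simp_all add: insert_commute)

lemma m13_45: "({1,3},{4,5}) \<in> \<Union>(set PP)"
  by (rule UnionI[OF pm8 memI2[of 1 _ 3 _ 5 _ 4]]) (simp_all add: insert_commute)

lemma m23_01: "({2,3},{0,1}) \<in> \<Union>(set PP)"
  by (rule UnionI[OF pm0 memI2[of 2 _ 3 _ 0 _ 1]]) (simp_all add: insert_commute)

lemma m23_02: "({2,3},{0,2}) \<in> \<Union>(set PP)"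
  by (rule UnionI[OF pm0 memI2[of 2 _ 3 _ 0 _ 2]]) (simp_all add: insert_commute)

lemma m23_03: "({2,3},{0,3}) \<in> \<Union>(set PP)"
  by (rule UnionI[OF pm10 memI2[of 2 _ 3 _ 0 _ 3]]) (simp_all add: insert_commute)

lemma m23_04: "({2,3},{0,4}) \<in> \<Union>(set PP)"
  by (rule UnionI[OF pm12 memI2[of 3 _ 2 _ 0 _ 4]]) (simp_all add: insert_commute)

lemma m23_05: "({2,3},{0,5}) \<in> \<Union>(set PP)"
  by (rule UnionI[OF pm0 memI2[of 2 _ 3 _ 0 _ 5]]) (simp_all add: insert_commute)

lemma m23_12: "({2,3},{1,2}) \<in> \<Union>(set PP)"
  by (rule UnionI[OF pm13 memI2[of 3 _ 2 _ 1 _ 2]]) (simp_all add: insert_commute)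

lemma m23_13: "({2,3},{1,3}) \<in> \<Union>(set PP)"
  by (rule UnionI[OF pm13 memI2[of 3 _ 2 _ 1 _ 3]]) (simp_all add: insert_commute)

lemma m23_14: "({2,3},{1,4}) \<in> \<Union>(set PP)"
  by (rule UnionI[OF pm0 memI2[of 2 _ 3 _ 4 _ 1]]) (simp_all add: insert_commute)

lemma m23_15: "({2,3},{1,5}) \<in> \<Union>(set PP)"
  by (rule UnionI[OF pm11 memI2[of 2 _ 3 _ 1 _ 5]]) (simp_all add: insert_commute)

lemma m23_23: "({2,3},{2,3}) \<in> \<Union>(set PP)"
  by (rule UnionI[OF pm10 memI2[of 2 _ 3 _ 2 _ 3]]) (simp_all add: insert_commute)

lemma m23_24: "({2,3},{2,4}) \<in> \<Union>(set PP)"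
  by (rule UnionI[OF pm0 memI2[of 2 _ 3 _ 4 _ 2]]) (simp_all add: insert_commute)

lemma m23_25: "({2,3},{2,5}) \<in> \<Union>(set PP)"
  by (rule UnionI[OF pm11 memI2[of 2 _ 3 _ 2 _ 5]]) (simp_all add: insert_commute)

lemma m23_34: "({2,3},{3,4}) \<in> \<Union>(set PP)"
  by (rule UnionI[OF pm12 memI2[of 3 _ 2 _ 3 _ 4]]) (simp_all add: insert_commute)

lemma m23_35: "({2,3},{3,5}) \<in> \<Union>(set PP)"
  by (rule UnionI[OF pm11 memI2[of 2 _ 3 _ 3 _ 5]]) (simp_all add: insert_commute)

lemma m23_45: "({2,3},{4,5}) \<in> \<Union>(set PP)"
  by (rule UnionI[OF pm0 memI2[of 2 _ 3 _ 4 _ 5]]) (simp_all add: insert_commute)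

lemma r01: "u < w \<Longrightarrow> w < 6 \<Longrightarrow> ({0,1},{u,w}) \<in> \<Union>(set PP)"
  by (drule (1) pairs6, elim disjE conjE; simp only: m01_01 m01_02 m01_03 m01_04 m01_05 m01_12 m01_13 m01_14 m01_15 m01_23 m01_24 m01_25 m01_34 m01_35 m01_45)

lemma r02: "u < w \<Longrightarrow> w < 6 \<Longrightarrow> ({0,2},{u,w}) \<in> \<Union>(set PP)"
  by (drule (1) pairs6, elim disjE conjE; simp only: m02_01 m02_02 m02_03 m02_04 m02_05 m02_12 m02_13 m02_14 m02_15 m02_23 m02_24 m02_25 m02_34 m02_35 m02_45)

lemma r03: "u < w \<Longrightarrow> w < 6 \<Longrightarrow> ({0,3},{u,w}) \<in> \<Union>(set PP)"
  by (drule (1) pairs6, elim disjE conjE; simp only: m03_01 m03_02 m03_03 m03_04 m03_05 m03_12 m03_13 m03_14 m03_15 m03_23 m03_24 m03_25 m03_34 m03_35 m03_45)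

lemma r12: "u < w \<Longrightarrow> w < 6 \<Longrightarrow> ({1,2},{u,w}) \<in> \<Union>(set PP)"
  by (drule (1) pairs6, elim disjE conjE; simp only: m12_01 m12_02 m12_03 m12_04 m12_05 m12_12 m12_13 m12_14 m12_15 m12_23 m12_24 m12_25 m12_34 m12_35 m12_45)

lemma r13: "u < w \<Longrightarrow> w < 6 \<Longrightarrow> ({1,3},{u,w}) \<in> \<Union>(set PP)"
  by (drule (1) pairs6, elim disjE conjE; simp only: m13_01 m13_02 m13_03 m13_04 m13_05 m13_12 m13_13 m13_14 m13_15 m13_23 m13_24 m13_25 m13_34 m13_35 m13_45)

lemma r23: "u < w \<Longrightarrow> w < 6 \<Longrightarrow> ({2,3},{u,w}) \<in> \<Union>(set PP)"
  by (drule (1) pairs6, elim disjE conjE; simp only: m23_01 m23_02 m23_03 m23_04 m23_05 m23_12 m23_13 m23_14 m23_15 m23_23 m23_24 m23_25 m23_34 m23_35 m23_45)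

lemma sup_ok: "complete_graph 4 \<times> complete_graph 6 \<subseteq> \<Union>(set PP)"
proof
  fix p assume "p \<in> complete_graph 4 \<times> complete_graph 6"
  then obtain x y u w where p: "p = ({x,y},{u,w})" "x < y" "y < 4" "u < w" "w < 6"
    unfolding cg_alt by blast
  from pairs4[OF p(2,3)] show "p \<in> \<Union>(set PP)"
    by (elim disjE conjE; simp only: p(1) r01 r02 r03 r12 r13 r23 p(4,5) simp_thms)
qed

lemma part_ok: "block_partition (complete_graph 4) (complete_graph 6) (set PP)"
  unfolding block_partition_def using blocks_ok sub_ok sup_ok disj_ok by blast

lemma len: "length PP = 14" unfolding PP_def by simp

theorem mainTheorem8:
  shows "g (complete_graph 4) (complete_graph 6) \<le> 14 \<and> (14::nat) < (4 - 1) * (6 - 1)"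
proof -
  have "g (complete_graph 4) (complete_graph 6) \<le> card (set PP)"
    unfolding g_def using part_ok by (intro Least_le) blast
  also have "\<dots> \<le> length PP" by (rule card_length)
  finally show ?thesis using len by simp
qed

end
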